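(* Let $u$ be a nonzero Laurent polynomial with symmetry type $\mathrm{S}u(z)=\epsilon z^c$, $\epsilon\in\{\pm1\}$, $c\in\mathbb Z$. Then $\epsilon=(-1)^{Z(u,1)}$ and $\mathrm{odd}(c)=\mathrm{odd}(Z(u,1)+Z(u,-1))$.
   Context: Laurent polynomial: $u(z)=\sum_k u(k)z^k$ with finitely many nonzero complex coefficients. $u$ has symmetry type $\epsilon z^c$ if $u(z)=\epsilon z^cu(z^{-1})$, and then $\mathrm{S}u(z):=u(z)/u(z^{-1})=\epsilon z^c$. $Z(u,z_0)$ is the multiplicity of $z_0\neq0$ as a zero of $u$. $\mathrm{odd}(k):=(1-(-1)^k)/2$. *)

theory Defs
  imports "HOL-Computational_Algebra.Polynomial"
begin

text \<open>A Laurent polynomial is a finitely supported coefficient function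
  \<open>u :: int \<Rightarrow> complex\<close>, representing \<open>u(z) = \<Sum>k u(k) z^k\<close>.\<close>

definition lp_supp :: "(int \<Rightarrow> complex) \<Rightarrow> int set" where
  "lp_supp u = {k. u k \<noteq> 0}"

definition laurent_poly :: "(int \<Rightarrow> complex) \<Rightarrow> bool" where
  "laurent_poly u \<longleftrightarrow> finite (lp_supp u)"

definition lp_eval :: "(int \<Rightarrow> complex) \<Rightarrow> complex \<Rightarrow> complex" where
  "lp_eval u z = (\<Sum>k\<in>lp_supp u. u k * z powi k)"

definition has_symtype :: "(int \<Rightarrow> complex) \<Rightarrow> complex \<Rightarrow> int \<Rightarrow> bool" where
  "has_symtype u \<epsilon> c \<longleftrightarrow>
     (\<forall>z. z \<noteq> 0 \<longrightarrow> lp_eval u z = \<epsilon> * z powi c * lp_eval u (inverse z))"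

text \<open>For nonzero \<open>u\<close>, \<open>u(z) = z^m p(z)\<close> with \<open>m\<close> the lowest exponent and
  \<open>p\<close> an ordinary polynomial with \<open>p(0) \<noteq> 0\<close>.\<close>
definition lp_poly :: "(int \<Rightarrow> complex) \<Rightarrow> complex poly" where
  "lp_poly u = (let m = Min (lp_supp u); n = Max (lp_supp u) in
     Poly (map (\<lambda>i. u (m + int i)) [0..<nat (n - m) + 1]))"

definition lp_Z :: "(int \<Rightarrow> complex) \<Rightarrow> complex \<Rightarrow> nat" where
  "lp_Z u z0 = order z0 (lp_poly u)"

definition odd_ind :: "int \<Rightarrow> int" where
  "odd_ind k = (1 - (-1) ^ nat \<bar>k\<bar>) div 2"

end

theory Submission
  imports Defs
begin

lemma powi_add_nz: "(z::complex) \<noteq> 0 \<Longrightarrow> z powi (a + b) = z powi a * z powi b"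
  by (simp add: power_int_add)

lemma poly_eq_nz:
  fixes P Q :: "complex poly"
  assumes "\<And>z. z \<noteq> 0 \<Longrightarrow> poly P z = poly Q z"
  shows "P = Q"
proof -
  have "\<And>z. poly ([:0,1:] * (P - Q)) z = 0"
    using assms by (case_tac "z = 0") auto
  then have "[:0,1:] * (P - Q) = 0" using poly_all_0_iff_0 by blast
  then show ?thesis by simp
qed

lemma core:
  fixes p :: "complex poly"
  assumes p0: "p \<noteq> 0" and sym: "p = smult \<epsilon> (reflect_poly p)"
  shows "\<epsilon> = (-1) ^ order 1 p \<and> even (degree p + order 1 p + order (-1) p)"
proof -
  define a where "a = order 1 p"
  define A :: "complex poly" where "A = [:-1,1:]"
  define B :: "complex poly" where "B = [:1,1:]"
  obtain q where q: "p = A ^ a * q" and nq: "\<not> A dvd q"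
    using order_decomp[OF p0, of 1] unfolding a_def A_def by auto
  have q0: "q \<noteq> 0" using q p0 by auto
  have q1: "poly q 1 \<noteq> 0" using nq poly_eq_0_iff_dvd[of q 1] unfolding A_def by auto
  have oA: "order (-1) (A ^ a) = 0"
    by (rule order_0I) (simp add: A_def)
  define b where "b = order (-1) q"
  have ob: "order (-1) p = b" unfolding b_def using q p0 order_mult[of "A^a" q "-1"] oA by simp
  obtain r where r: "q = B ^ b * r" and nr: "\<not> B dvd r"
    using order_decomp[OF q0, of "-1"] unfolding b_def B_def by auto
  have r0: "r \<noteq> 0" using r q0 by auto
  have rm1: "poly r (-1) \<noteq> 0" using nr poly_eq_0_iff_dvd[of r "-1"] unfolding B_def by auto
  have r1: "poly r 1 \<noteq> 0" using q1 r by (simp add: B_def)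
  have pe: "p = (A ^ a * B ^ b) * r" using q r by (simp add: mult.assoc)
  have rA: "reflect_poly A = smult (-1) A" by (simp add: A_def reflect_poly_def)
  have rB: "reflect_poly B = B" by (simp add: B_def reflect_poly_def)
  have "reflect_poly p = smult ((-1)^a) (A ^ a * B ^ b) * reflect_poly r"
  proof -
    have mA: "(smult (-1) A) ^ a = smult ((-1)^a) (A ^ a)" by (induct a) (auto simp: mult_ac)
    show ?thesis
    unfolding pe reflect_poly_mult reflect_poly_power rA rB mA
    by (simp add: mult_ac)
  qed
  with sym pe have eq: "(A ^ a * B ^ b) * r = (A ^ a * B ^ b) * smult (\<epsilon> * (-1)^a) (reflect_poly r)"
    by (simp add: mult_ac)
  have nz: "A ^ a * B ^ b \<noteq> 0" by (simp add: A_def B_def)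
  have rr: "r = smult (\<epsilon> * (-1)^a) (reflect_poly r)"
    using iffD1[OF mult_left_cancel[OF nz] eq] .
  have "poly r 1 = \<epsilon> * (-1)^a * poly r 1"
    using arg_cong[OF rr, of "\<lambda>s. poly s 1"] by (simp add: poly_reflect_poly_nz)
  then have e1: "\<epsilon> * (-1)^a = 1" using r1 by simp
  then have eps: "\<epsilon> = (-1)^a"
  proof -
    have "(-1::complex)^a * (-1)^a = 1" by (simp flip: power_add)
    then have "\<epsilon> = \<epsilon> * (-1)^a * (-1)^a" by (simp add: mult.assoc)
    then show ?thesis using e1 by simp
  qed
  have "poly r (-1) = (-1) ^ degree r * poly r (-1)"
    using arg_cong[OF rr, of "\<lambda>s. poly s (-1)"] e1 by (simp add: poly_reflect_poly_nz)
  then have "(-1::complex) ^ degree r = 1" using rm1 by simp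
  then have er: "even (degree r)"
    by (cases "even (degree r)") auto
  have "degree p = a + b + degree r" unfolding pe
    by (simp add: degree_mult_eq degree_power_eq A_def B_def r0)
  then have "even (degree p + a + b)" using er by presburger
  then show ?thesis using eps ob a_def by simp
qed

lemma poly_Poly_sum: "poly (Poly xs) (z::complex) = (\<Sum>i<length xs. xs!i * z^i)"
proof (induct xs)
  case (Cons a xs)
  have sh: "(\<Sum>i<length (a#xs). (a#xs)!i * z^i) = (a#xs)!0 * z^0 + (\<Sum>i<length xs. (a#xs)!(Suc i) * z^(Suc i))"
    by (simp only: length_Cons sum.lessThan_Suc_shift)
  have "poly (Poly (a#xs)) z = a + (\<Sum>i<length xs. z*(xs!i * z^i))" using Cons by (simp add: sum_distrib_left)
  also have "\<dots> = (\<Sum>i<length (a#xs). (a#xs)!i * z^i)" unfolding sh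
    apply simp
    apply (rule sum.cong) by auto
  finally show ?case .
qed simp

lemma odd_ind_alt: "odd_ind k = (if even k then 0 else 1)"
  unfolding odd_ind_def by (cases "k \<ge> 0") (auto simp: even_nat_iff)


theorem lemma3p2:
  fixes u :: "int \<Rightarrow> complex" and \<epsilon> :: complex and c :: int
  assumes "laurent_poly u"
    and "u \<noteq> (\<lambda>_. 0)"
    and "\<epsilon> \<in> {1, -1}"
    and "has_symtype u \<epsilon> c"
  shows "\<epsilon> = (-1) ^ lp_Z u 1
    \<and> odd_ind c = odd_ind (int (lp_Z u 1 + lp_Z u (-1)))"
proof -
  define S where "S = lp_supp u"
  have fS: "finite S" using assms(1) by (simp add: S_def laurent_poly_def)
  have neS: "S \<noteq> {}" using assms(2) by (auto simp: S_def lp_supp_def)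
  define m where "m = Min S"
  define n where "n = Max S"
  have mS: "m \<in> S" using fS neS by (simp add: m_def)
  have Smn: "S \<subseteq> {m..n}" using fS neS by (auto simp: m_def n_def)
  have mn: "m \<le> n" using Smn mS by auto
  define N where "N = nat (n - m) + 1"
  define xs where "xs = map (\<lambda>i. u (m + int i)) [0..<N]"
  define p where "p = lp_poly u"
  have pxs: "p = Poly xs" unfolding p_def lp_poly_def xs_def N_def m_def n_def S_def Let_def ..
  have um: "u m \<noteq> 0" using mS by (simp add: S_def lp_supp_def)
  have c0: "coeff p 0 = u m" unfolding pxs xs_def N_def by (simp add: nth_default_def upt_conv_Cons del: upt_Suc)
  have p0: "p \<noteq> 0" using c0 um by auto
  have polyp: "poly p z = (\<Sum>i<N. u (m + int i) * z^i)" for z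
    unfolding pxs poly_Poly_sum by (simp add: xs_def)
  have img: "{m..n} = (\<lambda>i. m + int i) ` {..<N}"
  proof
    show "{m..n} \<subseteq> (\<lambda>i. m + int i) ` {..<N}"
    proof
      fix k assume "k \<in> {m..n}"
      then have "k = m + int (nat (k - m))" "nat (k - m) \<in> {..<N}" by (auto simp: N_def)
      then show "k \<in> (\<lambda>i. m + int i) ` {..<N}" by blast
    qed
  qed (use mn in \<open>auto simp: N_def\<close>)
  have inj: "inj_on (\<lambda>i. m + int i) {..<N}" by (auto simp: inj_on_def)
  have ev: "lp_eval u z = z powi m * poly p z" if z: "z \<noteq> 0" for z
  proof -
    have "lp_eval u z = (\<Sum>k\<in>S. u k * z powi k)" by (simp add: lp_eval_def S_def)
    also have "\<dots> = (\<Sum>k\<in>{m..n}. u k * z powi k)"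
      by (rule sum.mono_neutral_left) (use Smn in \<open>auto simp: S_def lp_supp_def\<close>)
    also have "\<dots> = (\<Sum>i<N. u (m + int i) * z powi (m + int i))"
      unfolding img by (simp add: sum.reindex[OF inj])
    also have "\<dots> = (\<Sum>i<N. z powi m * (u (m + int i) * z ^ i))"
      by (rule sum.cong) (simp_all add: powi_add_nz[OF z])
    also have "\<dots> = z powi m * poly p z" by (simp add: polyp sum_distrib_left)
    finally show ?thesis .
  qed
  define k where "k = c - 2 * m"
  have sym1: "poly p z = \<epsilon> * z powi k * poly p (inverse z)" if z: "z \<noteq> 0" for z
  proof -
    have iz: "inverse z \<noteq> 0" using z by simp
    have h: "lp_eval u z = \<epsilon> * z powi c * lp_eval u (inverse z)"
      using assms(4) z unfolding has_symtype_def by blast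
    have A: "z powi m * poly p z = \<epsilon> * z powi c * (inverse z powi m * poly p (inverse z))"
      using h unfolding ev[OF z] ev[OF iz] .
    have C: "z powi c = z powi m * z powi m * z powi k"
    proof -
      have "c = m + m + k" by (simp add: k_def)
      then have "z powi c = z powi (m + m + k)" by simp
      also have "\<dots> = z powi m * z powi m * z powi k" by (simp only: powi_add_nz[OF z])
      finally show ?thesis .
    qed
    have IW: "inverse z powi m * z powi m = 1"
      by (simp only: power_int_inverse) (simp add: z)
    have W: "z powi m \<noteq> 0" using z by simp
    have "z powi m * poly p z = \<epsilon> * (z powi m * z powi m * z powi k) * (inverse z powi m * poly p (inverse z))"
      using A C by simp
    also have "\<dots> = z powi m * (\<epsilon> * z powi k * poly p (inverse z)) * (inverse z powi m * z powi m)"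
      by (simp only: mult_ac)
    also have "\<dots> = z powi m * (\<epsilon> * z powi k * poly p (inverse z))" by (simp only: IW mult_1_right)
    finally show ?thesis using W z by simp
  qed
  define d where "d = degree p"
  define R where "R = reflect_poly p"
  have polyR: "poly R z = z^d * poly p (inverse z)" if z: "z \<noteq> 0" for z
    unfolding R_def d_def using poly_reflect_poly_nz[OF z] .
  have eps0: "\<epsilon> \<noteq> 0" using assms(3) by auto
  have kd: "k = int d"
  proof (rule ccontr)
    assume "k \<noteq> int d"
    then consider "k > int d" | "k < int d" by linarith
    then show False
    proof cases
      case 1
      define j where "j = nat (k - int d)"
      have j0: "j > 0" using 1 j_def by simp
      have "p = smult \<epsilon> (monom 1 j * R)"
      proof (rule poly_eq_nz)
        fix z :: complex assume z: "z \<noteq> 0"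
        have "k = int j + int d" using 1 j_def by simp
        then have "z powi k = z powi (int j + int d)" by simp
        also have "\<dots> = z^j * z^d" by (simp only: powi_add_nz[OF z] power_int_of_nat)
        finally have zk: "z powi k = z^j * z^d" .
        show "poly p z = poly (smult \<epsilon> (monom 1 j * R)) z"
          using sym1[OF z] polyR[OF z] zk by (simp add: poly_monom mult_ac)
      qed
      then have "coeff p 0 = 0" using j0 by (simp add: coeff_monom_mult)
      then show False using c0 um by simp
    next
      case 2
      define j where "j = nat (int d - k)"
      have j0: "j > 0" using 2 j_def by simp
      have "monom 1 j * p = smult \<epsilon> R"
      proof (rule poly_eq_nz)
        fix z :: complex assume z: "z \<noteq> 0"
        have "int d = int j + k" using 2 j_def by simp
        then have "z powi int d = z powi (int j + k)" by simp
        also have "\<dots> = z^j * z powi k" by (simp only: powi_add_nz[OF z] power_int_of_nat)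
        finally have zk: "z^d = z^j * z powi k" by simp
        show "poly (monom 1 j * p) z = poly (smult \<epsilon> R) z"
          using sym1[OF z] polyR[OF z] zk by (simp add: poly_monom mult_ac)
      qed
      then have "coeff (monom 1 j * p) 0 = coeff (smult \<epsilon> R) 0" by simp
      then have "\<epsilon> * lead_coeff p = 0" using j0 by (simp add: coeff_monom_mult R_def)
      then show False using eps0 p0 by simp
    qed
  qed
  have pR: "p = smult \<epsilon> R"
  proof (rule poly_eq_nz)
    fix z :: complex assume z: "z \<noteq> 0"
    show "poly p z = poly (smult \<epsilon> R) z"
      using sym1[OF z] polyR[OF z] kd by simp
  qed
  have cr: "\<epsilon> = (-1) ^ order 1 p \<and> even (degree p + order 1 p + order (-1) p)"
    using core[OF p0 pR[unfolded R_def]] .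
  have Z: "lp_Z u 1 = order 1 p" "lp_Z u (-1) = order (-1) p" by (simp_all add: lp_Z_def p_def)
  have cd: "c = 2 * m + int d" using kd k_def by simp
  have "even c = even (int (order 1 p + order (-1) p))"
    using cr cd unfolding d_def by (simp add: even_add) blast
  then show ?thesis using cr Z by (simp add: odd_ind_alt)
qed
end
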